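(* The relation $\prec$ on phasers, restricted to the set $\mathcal{P}^{WO}$ of well-ordered phasers, is a causality relation: (i) for all $P,Q,R\in\mathcal{P}^{WO}$, if $P\prec Q$ and $Q\prec R$ then $P\prec R$; (ii) for all $P\in\mathcal{P}^{WO}$, $\neg(P\prec P)$; (iii) for all $P,Q\in\mathcal{P}^{WO}$, if $P\prec Q$ then $\neg(Q\prec P)$.
   Context: A view is a record $v=(\mathrm{sp}(v),\mathrm{wp}(v),\mathrm{mode}(v))$ with $\mathrm{sp}(v),\mathrm{wp}(v)\in\mathbb{N}$ and $\mathrm{mode}(v)\in\{\mathtt{SW},\mathtt{SO},\mathtt{WO}\}$. $\mathrm{CanSignal}(v)$ iff $\mathrm{mode}(v)\in\{\mathtt{SW},\mathtt{SO}\}$; $\mathrm{CanWait}(v)$ iff $\mathrm{mode}(v)\in\{\mathtt{SW},\mathtt{WO}\}$. A phaser $P$ is a finite partial map from task identifiers to views. For views, $v_1\prec v_2$ iff $\mathrm{CanSignal}(v_1)$, $\mathrm{sp}(v_1)<\mathrm{wp}(v_2)$ and $\mathrm{CanWait}(v_2)$; and $v_1\unrhd v_2$ iff $\mathrm{mode}(v_1)=\mathtt{WO}$ or $\mathrm{sp}(v_1)\ge\mathrm{wp}(v_2)$ or $\mathrm{mode}(v_2)=\mathtt{SO}$. For phasers, $P\prec Q$ iff there exist $t\in\mathrm{dom}\,P$, $t'\in\mathrm{dom}\,Q$ with $P(t)\prec Q(t')$; $P\unrhd Q$ iff $P(t)\unrhd Q(t')$ for all $t\in\mathrm{dom}\,P$,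 $t'\in\mathrm{dom}\,Q$. $P$ is well-ordered iff $P\unrhd P$. *)

theory Defs
  imports Main
begin

datatype mode = SW | SO | WO

record view =
  sp :: nat
  wp :: nat
  vmode :: mode

definition can_signal :: "view \<Rightarrow> bool" where
  "can_signal v \<longleftrightarrow> vmode v \<in> {SW, SO}"

definition can_wait :: "view \<Rightarrow> bool" where
  "can_wait v \<longleftrightarrow> vmode v \<in> {SW, WO}"

definition view_prec :: "view \<Rightarrow> view \<Rightarrow> bool" where
  "view_prec v1 v2 \<longleftrightarrow> can_signal v1 \<and> sp v1 < wp v2 \<and> can_wait v2"

definition view_ge :: "view \<Rightarrow> view \<Rightarrow> bool" where
  "view_ge v1 v2 \<longleftrightarrow> vmode v1 = WO \<or> sp v1 \<ge> wp v2 \<or> vmode v2 = SO"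

type_synonym 't phaser = "'t \<rightharpoonup> view"

definition is_phaser :: "'t phaser \<Rightarrow> bool" where
  "is_phaser P \<longleftrightarrow> finite (dom P)"

definition phaser_prec :: "'t phaser \<Rightarrow> 't phaser \<Rightarrow> bool" where
  "phaser_prec P Q \<longleftrightarrow>
     (\<exists>t\<in>dom P. \<exists>t'\<in>dom Q. view_prec (the (P t)) (the (Q t')))"

definition phaser_ge :: "'t phaser \<Rightarrow> 't phaser \<Rightarrow> bool" where
  "phaser_ge P Q \<longleftrightarrow>
     (\<forall>t\<in>dom P. \<forall>t'\<in>dom Q. view_ge (the (P t)) (the (Q t')))"

definition well_ordered :: "'t phaser \<Rightarrow> bool" where
  "well_ordered P \<longleftrightarrow> phaser_ge P P"

definition wo_phasers :: "'t phaser set" where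
  "wo_phasers = {P. is_phaser P \<and> well_ordered P}"

end

theory Submission
  imports Defs
begin

lemma trans_aux:
  assumes "Q \<in> wo_phasers" "phaser_prec P Q" "phaser_prec Q R"
  shows "phaser_prec P R"
proof -
  from assms(2) obtain a b where ab: "a \<in> dom P" "b \<in> dom Q" "view_prec (the (P a)) (the (Q b))"
    unfolding phaser_prec_def by blast
  from assms(3) obtain c d where cd: "c \<in> dom Q" "d \<in> dom R" "view_prec (the (Q c)) (the (R d))"
    unfolding phaser_prec_def by blast
  have "view_ge (the (Q c)) (the (Q b))" using assms(1) ab cd
    unfolding wo_phasers_def well_ordered_def phaser_ge_def by blast
  then have "view_prec (the (P a)) (the (R d))" using ab cd
    unfolding view_ge_def view_prec_def can_signal_def can_wait_def by auto
  then show ?thesis using ab cd unfolding phaser_prec_def by blast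
qed

lemma irrefl_aux:
  assumes "P \<in> wo_phasers" shows "\<not> phaser_prec P P"
proof
  assume "phaser_prec P P"
  then obtain a b where ab: "a \<in> dom P" "b \<in> dom P" "view_prec (the (P a)) (the (P b))"
    unfolding phaser_prec_def by blast
  have "view_ge (the (P a)) (the (P b))" using assms ab
    unfolding wo_phasers_def well_ordered_def phaser_ge_def by blast
  then show False using ab
    unfolding view_ge_def view_prec_def can_signal_def can_wait_def by auto
qed

theorem theorem1:
  shows "(\<forall>P\<in>wo_phasers. \<forall>Q\<in>wo_phasers. \<forall>R\<in>wo_phasers.
            phaser_prec P Q \<longrightarrow> phaser_prec Q R \<longrightarrow> phaser_prec P R)
       \<and> (\<forall>P\<in>wo_phasers. \<not> phaser_prec P P)
       \<and> (\<forall>P\<in>wo_phasers. \<forall>Q\<in>wo_phasers. phaser_prec P Q \<longrightarrow> \<not> phaser_prec Q P)"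
proof (intro conjI ballI impI)
  fix P Q R
  assume "Q \<in> wo_phasers" "phaser_prec P Q" "phaser_prec Q R"
  then show "phaser_prec P R" using trans_aux by blast
next
  fix P assume "P \<in> wo_phasers"
  then show "\<not> phaser_prec P P" using irrefl_aux by blast
next
  fix P Q
  assume "P \<in> wo_phasers" "Q \<in> wo_phasers" "phaser_prec P Q"
  then show "\<not> phaser_prec Q P" using trans_aux irrefl_aux by blast
qed

end
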